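(* Let $p$ be a prime, $\Phi:\mathbb{N}\to\mathbb{N}$ strictly increasing, and $f:\mathbb{Z}_p\to\mathbb{Z}_p$ continuous. Then $f\in\mathcal{F}(\Phi)$ if and only if $v_p(B(\Phi,f;m))\ge \tau(\Phi;m)$ for every nonnegative integer $m$.
   Context: $\mathbb{N}=\{0,1,2,\dots\}$. $v_p$, $|\cdot|_p$ are the $p$-adic valuation and absolute value ($v_p(p)=1$, $|p|_p=p^{-1}$). For a nonnegative integer $m$, $m_i$ denote its base-$p$ digits. Set $\Phi(-1):=-1$. $\tau(\Phi;m):=\min\{h\in\mathbb{N}: m<p^{1+\Phi(h)}\}$. For $m\ge p^{1+\Phi(0)}$, $M(m):=\sum_{i=\Phi(\tau(\Phi;m)-1)+1}^{\Phi(\tau(\Phi;m))} m_ip^i$. Define $B(\Phi,f;m):=f(m)$ if $m<p^{1+\Phi(0)}$ and $B(\Phi,f;m):=f(m)-f(m-M(m))$ otherwise (these are the unique coefficients with $f(x)=\sum_m B(\Phi,f;m)\chi(\Phi,m;x)$, where $\chi(\Phi,m;x)=1$ if $|x-m|_p\le p^{-1-\Phi(\tau(\Phi;m))}$ and $0$ otherwise). $\mathcal{F}(\Phi)$ is the class of continuous $f:\mathbb{Z}_p\to\mathbb{Z}_p$ such that for every positive integer $n$ and all $x,y\in\mathbb{Z}_p$: if $|x-y|_p\le p^{-1-\Phi(n-1)}$ then $|f(x)-f(y)|_p\le p^{-n}$. *)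

theory Defs
  imports Complex_Main "HOL-Library.Extended_Nat" "HOL-Computational_Algebra.Primes"
begin

text \<open>p-adic integers, represented as coherent sequences of residues:
  x n is the residue of x modulo p^n, in [0, p^n).\<close>

type_synonym zp = "nat \<Rightarrow> int"

definition Zp :: "nat \<Rightarrow> zp set" where
  "Zp p = {x. \<forall>n. 0 \<le> x n \<and> x n < int p ^ n \<and> x n = x (Suc n) mod (int p ^ n)}"

definition zp_of_nat :: "nat \<Rightarrow> nat \<Rightarrow> zp" where
  "zp_of_nat p m = (\<lambda>n. int m mod (int p ^ n))"

definition zp_diff :: "nat \<Rightarrow> zp \<Rightarrow> zp \<Rightarrow> zp" where
  "zp_diff p x y = (\<lambda>n. (x n - y n) mod (int p ^ n))"

definition zp_val :: "nat \<Rightarrow> zp \<Rightarrow> enat" where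
  "zp_val p x = (if (\<forall>n. x n = 0) then \<infinity> else enat (LEAST n. x (Suc n) \<noteq> 0))"

definition zp_abs :: "nat \<Rightarrow> zp \<Rightarrow> real" where
  "zp_abs p x = (case zp_val p x of \<infinity> \<Rightarrow> 0 | enat k \<Rightarrow> (1 / real p) ^ k)"

definition zp_continuous :: "nat \<Rightarrow> (zp \<Rightarrow> zp) \<Rightarrow> bool" where
  "zp_continuous p f \<longleftrightarrow> f ` Zp p \<subseteq> Zp p \<and>
     (\<forall>x\<in>Zp p. \<forall>e>0. \<exists>d>0. \<forall>y\<in>Zp p.
        zp_abs p (zp_diff p x y) < d \<longrightarrow> zp_abs p (zp_diff p (f x) (f y)) < e)"

definition digit :: "nat \<Rightarrow> nat \<Rightarrow> nat \<Rightarrow> nat" where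
  "digit p m i = m div p ^ i mod p"

definition tau :: "nat \<Rightarrow> (nat \<Rightarrow> nat) \<Rightarrow> nat \<Rightarrow> nat" where
  "tau p \<Phi> m = (LEAST h. m < p ^ (1 + \<Phi> h))"

text \<open>M(m), used only when m \<ge> p^(1+\<Phi>(0)) (so that tau \<ge> 1 and \<Phi>(tau-1) is defined).\<close>
definition Mblock :: "nat \<Rightarrow> (nat \<Rightarrow> nat) \<Rightarrow> nat \<Rightarrow> nat" where
  "Mblock p \<Phi> m = (\<Sum>i = \<Phi> (tau p \<Phi> m - 1) + 1 .. \<Phi> (tau p \<Phi> m). digit p m i * p ^ i)"

definition Bcoef :: "nat \<Rightarrow> (nat \<Rightarrow> nat) \<Rightarrow> (zp \<Rightarrow> zp) \<Rightarrow> nat \<Rightarrow> zp" where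
  "Bcoef p \<Phi> f m = (if m < p ^ (1 + \<Phi> 0) then f (zp_of_nat p m)
     else zp_diff p (f (zp_of_nat p m)) (f (zp_of_nat p (m - Mblock p \<Phi> m))))"

definition FF :: "nat \<Rightarrow> (nat \<Rightarrow> nat) \<Rightarrow> (zp \<Rightarrow> zp) set" where
  "FF p \<Phi> = {f. zp_continuous p f \<and>
     (\<forall>n>0. \<forall>x\<in>Zp p. \<forall>y\<in>Zp p.
        zp_abs p (zp_diff p x y) \<le> (1 / real p) ^ (1 + \<Phi> (n - 1)) \<longrightarrow>
        zp_abs p (zp_diff p (f x) (f y)) \<le> (1 / real p) ^ n)}"

end

theory Submission
  imports Defs
begin

lemma Zp_D:
  assumes "x \<in> Zp p"
  shows "0 \<le> x n" "x n < int p ^ n" "x n = x (Suc n) mod (int p ^ n)"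
  using assms unfolding Zp_def by blast+

lemma Zp_coh:
  assumes "x \<in> Zp p" "j \<le> k"
  shows "x j = x k mod (int p ^ j)"
  using assms(2)
proof (induction k)
  case 0 then show ?case using Zp_D[OF assms(1), of 0] by simp
next
  case (Suc k)
  have xs: "x k = x (Suc k) mod int p ^ k" using Zp_D[OF assms(1)] by blast
  show ?case
  proof (cases "j = Suc k")
    case True
    have "0 \<le> x (Suc k)" "x (Suc k) < int p ^ Suc k" using Zp_D[OF assms(1)] by blast+
    then show ?thesis using True by simp
  next
    case False
    then have "j \<le> k" using Suc by simp
    then have "x j = x k mod int p ^ j" using Suc by simp
    also have "\<dots> = x (Suc k) mod int p ^ j"
      using xs \<open>j \<le> k\<close> by (simp add: mod_mod_cancel le_imp_power_dvd)
    finally show ?thesis .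
  qed
qed

lemma Zp_0: "x \<in> Zp p \<Longrightarrow> x 0 = 0"
proof -
  assume "x \<in> Zp p"
  then have "0 \<le> x 0" "x 0 < 1" using Zp_D[of x p 0] by auto
  then show "x 0 = 0" by simp
qed

lemma zp_diff_Zp:
  assumes "p > 0" "x \<in> Zp p" "y \<in> Zp p"
  shows "zp_diff p x y \<in> Zp p"
proof -
  have "(x n - y n) mod int p ^ n = ((x (Suc n) - y (Suc n)) mod int p ^ Suc n) mod int p ^ n" for n
  proof -
    have "x n = x (Suc n) mod int p ^ n" "y n = y (Suc n) mod int p ^ n"
      using Zp_D assms by blast+
    then have "(x n - y n) mod int p ^ n = (x (Suc n) - y (Suc n)) mod int p ^ n"
      by (metis mod_diff_eq)
    also have "\<dots> = ((x (Suc n) - y (Suc n)) mod int p ^ Suc n) mod int p ^ n"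
      by (simp add: mod_mod_cancel le_imp_power_dvd)
    finally show ?thesis .
  qed
  note eq = this
  have pp: "int p ^ n > 0" for n using assms(1) by simp
  show ?thesis unfolding Zp_def mem_Collect_eq zp_diff_def
  proof (intro allI conjI)
    fix n
    show "0 \<le> (x n - y n) mod int p ^ n" using pp[of n] by simp
    show "(x n - y n) mod int p ^ n < int p ^ n" using pp[of n] by simp
    show "(x n - y n) mod int p ^ n = ((x (Suc n) - y (Suc n)) mod int p ^ Suc n) mod int p ^ n"
      by (rule eq)
  qed
qed

lemma zp_of_nat_Zp: "p > 0 \<Longrightarrow> zp_of_nat p a \<in> Zp p"
  unfolding Zp_def zp_of_nat_def
  by (auto simp: mod_mod_cancel le_imp_power_dvd)

lemma val_ge:
  assumes "x \<in> Zp p"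
  shows "enat k \<le> zp_val p x \<longleftrightarrow> x k = 0"
proof (cases "\<forall>n. x n = 0")
  case True then show ?thesis unfolding zp_val_def by simp
next
  case False
  define L where "L = (LEAST n. x (Suc n) \<noteq> 0)"
  have v: "zp_val p x = enat L" using False unfolding zp_val_def L_def by simp
  obtain n where n: "x n \<noteq> 0" using False by auto
  with Zp_0[OF assms] obtain n' where "x (Suc n') \<noteq> 0" by (cases n) auto
  then have xL: "x (Suc L) \<noteq> 0" unfolding L_def by (rule LeastI)
  show ?thesis
  proof
    assume "enat k \<le> zp_val p x"
    then have "k \<le> L" using v by simp
    show "x k = 0"
    proof (cases k)
      case 0 then show ?thesis using Zp_0[OF assms] by simp
    next
      case (Suc j)
      then have "j < L" using \<open>k \<le> L\<close> by simp
      then show ?thesis using Suc not_less_Least[of j "\<lambda>n. x (Suc n) \<noteq> 0"] unfolding L_def by auto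
    qed
  next
    assume xk: "x k = 0"
    show "enat k \<le> zp_val p x"
    proof (rule ccontr)
      assume "\<not> ?thesis"
      then have "Suc L \<le> k" using v by simp
      then have "x (Suc L) = x k mod int p ^ Suc L" by (rule Zp_coh[OF assms])
      then show False using xk xL by simp
    qed
  qed
qed

lemma diff_zero:
  assumes "x \<in> Zp p" "y \<in> Zp p"
  shows "zp_diff p x y k = 0 \<longleftrightarrow> x k = y k"
proof -
  have b: "0 \<le> x k" "x k < int p ^ k" "0 \<le> y k" "y k < int p ^ k"
    using Zp_D assms by blast+
  show ?thesis
  proof
    assume "zp_diff p x y k = 0"
    then have "int p ^ k dvd x k - y k" unfolding zp_diff_def by (simp add: mod_eq_0_iff_dvd)
    then obtain c where c: "x k - y k = int p ^ k * c" by (auto elim: dvdE)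
    have "c = 0"
    proof (rule ccontr)
      assume "c \<noteq> 0"
      then have c1: "\<bar>c\<bar> \<ge> 1" by simp
      have pk: "int p ^ k \<ge> 0" using b by linarith
      have "\<bar>int p ^ k * c\<bar> = int p ^ k * \<bar>c\<bar>" using pk by (simp add: abs_mult)
      also have "\<dots> \<ge> int p ^ k * 1" using c1 pk by (intro mult_left_mono) auto
      finally have "\<bar>int p ^ k * c\<bar> \<ge> int p ^ k" by simp
      then show False using b c by linarith
    qed
    then show "x k = y k" using c by simp
  qed (simp add: zp_diff_def)
qed

lemma abs_le:
  assumes "prime p"
  shows "zp_abs p x \<le> (1 / real p) ^ k \<longleftrightarrow> enat k \<le> zp_val p x"
proof -
  have p: "real p \<ge> 2" using prime_ge_2_nat[OF assms] by simp
  have b: "0 < 1 / real p" "1 / real p < 1" using p by auto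
  show ?thesis
  proof (cases "zp_val p x")
    case (enat v)
    then show ?thesis unfolding zp_abs_def using power_decreasing_iff[OF b] by simp
  next
    case infinity
    then show ?thesis unfolding zp_abs_def using b by simp
  qed
qed

lemma close_iff:
  assumes "prime p" "x \<in> Zp p" "y \<in> Zp p"
  shows "zp_abs p (zp_diff p x y) \<le> (1 / real p) ^ k \<longleftrightarrow> x k = y k"
proof -
  have "p > 0" using assms(1) prime_gt_0_nat by blast
  then show ?thesis
    using abs_le[OF assms(1)] val_ge[OF zp_diff_Zp[OF _ assms(2,3)]] diff_zero[OF assms(2,3)] by simp
qed


lemma tau_ex:
  fixes m p :: nat and \<Phi> :: "nat \<Rightarrow> nat"
  assumes "p \<ge> 2" "strict_mono \<Phi>"
  shows "\<exists>h. m < p ^ (1 + \<Phi> h)"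
proof
  have "m < 2 ^ m" by simp
  also have "\<dots> \<le> p ^ m" using assms(1) by (simp add: power_mono)
  also have "\<dots> \<le> p ^ (1 + \<Phi> m)"
    using assms strict_mono_imp_increasing[OF assms(2), of m] by (intro power_increasing) auto
  finally show "m < p ^ (1 + \<Phi> m)" .
qed

lemma tau_lt:
  assumes "p \<ge> 2" "strict_mono \<Phi>"
  shows "m < p ^ (1 + \<Phi> (tau p \<Phi> m))"
  unfolding tau_def by (rule LeastI_ex) (rule tau_ex[OF assms])

lemma tau_ge: "h < tau p \<Phi> m \<Longrightarrow> p ^ (1 + \<Phi> h) \<le> m"
  unfolding tau_def using not_less_Least[of h "\<lambda>h. m < p ^ (1 + \<Phi> h)"] by simp

lemma tau_le: "m < p ^ (1 + \<Phi> h) \<Longrightarrow> tau p \<Phi> m \<le> h"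
  unfolding tau_def by (rule Least_le)

lemma digits_mod: "m mod p ^ k = (\<Sum>i<k. digit p m i * p ^ i)"
proof (induction k)
  case 0 then show ?case by simp
next
  case (Suc k)
  have "m mod p ^ Suc k = m mod (p ^ k * p)" by (metis power_Suc2)
  also have "\<dots> = p ^ k * (m div p ^ k mod p) + m mod p ^ k" by (rule mod_mult2_eq)
  also have "\<dots> = digit p m k * p ^ k + (\<Sum>i<k. digit p m i * p ^ i)"
    using Suc by (simp add: digit_def mult.commute)
  finally show ?case by simp
qed

lemma Mblock_eq:
  assumes "p \<ge> 2" "strict_mono \<Phi>" "tau p \<Phi> m > 0"
  shows "Mblock p \<Phi> m = m - m mod p ^ (1 + \<Phi> (tau p \<Phi> m - 1))"
proof -
  define t where "t = tau p \<Phi> m"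
  define a where "a = \<Phi> (t - 1)"
  define b where "b = \<Phi> t"
  define g where "g = (\<lambda>i. digit p m i * p ^ i)"
  have ab: "a < b" unfolding a_def b_def using assms(2,3) t_def
    by (simp add: strict_mono_less)
  have mb: "m < p ^ Suc b" using tau_lt[OF assms(1,2), of m] unfolding b_def t_def by simp
  have M: "Mblock p \<Phi> m = sum g {Suc a..<Suc b}"
    unfolding Mblock_def g_def a_def b_def t_def
    by (simp add: atLeastLessThanSuc_atLeastAtMost)
  have "sum g {0..<Suc a} + sum g {Suc a..<Suc b} = sum g {0..<Suc b}"
    using ab by (intro sum.atLeastLessThan_concat) auto
  moreover have "sum g {0..<Suc b} = m"
    using digits_mod[of m p "Suc b"] mb unfolding g_def by (simp add: atLeast0LessThan)
  moreover have "sum g {0..<Suc a} = m mod p ^ (1 + a)"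
    using digits_mod[of m p "Suc a"] unfolding g_def by (simp add: atLeast0LessThan)
  ultimately have eq: "sum g {Suc a..<Suc b} = m - m mod p ^ (1 + a)" by linarith
  have "Mblock p \<Phi> m = m - m mod p ^ (1 + a)" using M eq by simp
  then show ?thesis unfolding a_def t_def .
qed

lemma zp_of_nat_at: "zp_of_nat p a k = int a mod int p ^ k"
  by (simp add: zp_of_nat_def)

lemma zp_of_nat_eq_iff: "zp_of_nat p a k = zp_of_nat p b k \<longleftrightarrow> a mod p ^ k = b mod p ^ k"
  unfolding zp_of_nat_def
  by (metis of_nat_eq_iff of_nat_mod of_nat_power)

lemma Bcoef_big:
  assumes "p \<ge> 2" "strict_mono \<Phi>" "tau p \<Phi> m > 0"
  shows "Bcoef p \<Phi> f m = zp_diff p (f (zp_of_nat p m)) (f (zp_of_nat p (m mod p ^ (1 + \<Phi> (tau p \<Phi> m - 1)))))"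
proof -
  have "p ^ (1 + \<Phi> 0) \<le> m" using tau_ge[OF assms(3)] .
  moreover have "m - Mblock p \<Phi> m = m mod p ^ (1 + \<Phi> (tau p \<Phi> m - 1))"
    using Mblock_eq[OF assms] by (simp add: diff_diff_cancel mod_less_eq_dividend)
  ultimately show ?thesis unfolding Bcoef_def by simp
qed


lemma fZp: "zp_continuous p f \<Longrightarrow> x \<in> Zp p \<Longrightarrow> f x \<in> Zp p"
  unfolding zp_continuous_def by blast

lemma fwd:
  assumes pr: "prime p" and sm: "strict_mono \<Phi>" and fc: "zp_continuous p f" and fF: "f \<in> FF p \<Phi>"
  shows "enat (tau p \<Phi> m) \<le> zp_val p (Bcoef p \<Phi> f m)"
proof (cases "tau p \<Phi> m = 0")
  case True then show ?thesis by (simp add: zero_enat_def[symmetric])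
next
  case False
  define t where "t = tau p \<Phi> m"
  have p2: "p \<ge> 2" using prime_ge_2_nat[OF pr] .
  have p0: "p > 0" using p2 by simp
  define K where "K = 1 + \<Phi> (t - 1)"
  define a where "a = zp_of_nat p m"
  define b where "b = zp_of_nat p (m mod p ^ K)"
  have aZ: "a \<in> Zp p" and bZ: "b \<in> Zp p" unfolding a_def b_def using zp_of_nat_Zp[OF p0] by auto
  have B: "Bcoef p \<Phi> f m = zp_diff p (f a) (f b)"
    using Bcoef_big[OF p2 sm, of m f] False unfolding a_def b_def K_def t_def by simp
  have "a K = b K" unfolding a_def b_def zp_of_nat_eq_iff by simp
  then have "zp_abs p (zp_diff p a b) \<le> (1 / real p) ^ (1 + \<Phi> (t - 1))"
    using close_iff[OF pr aZ bZ, of K] unfolding K_def by blast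
  moreover have "t > 0" using False t_def by simp
  ultimately have "zp_abs p (zp_diff p (f a) (f b)) \<le> (1 / real p) ^ t"
    using fF aZ bZ unfolding FF_def by blast
  then have "f a t = f b t" using close_iff[OF pr fZp[OF fc aZ] fZp[OF fc bZ]] by simp
  then show ?thesis
    unfolding B t_def using val_ge[OF zp_diff_Zp[OF p0 fZp[OF fc aZ] fZp[OF fc bZ]]]
      diff_zero[OF fZp[OF fc aZ] fZp[OF fc bZ]] by simp
qed

lemma nat_step:
  assumes pr: "prime p" and sm: "strict_mono \<Phi>" and fc: "zp_continuous p f"
    and H: "\<forall>m. enat (tau p \<Phi> m) \<le> zp_val p (Bcoef p \<Phi> f m)" and n0: "n > 0"
  shows "f (zp_of_nat p m) n = f (zp_of_nat p (m mod p ^ (1 + \<Phi> (n - 1)))) n"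
proof (induction m rule: less_induct)
  case (less m)
  define K where "K = 1 + \<Phi> (n - 1)"
  have p2: "p \<ge> 2" using prime_ge_2_nat[OF pr] .
  have p0: "p > 0" using p2 by simp
  show ?case
  proof (cases "m < p ^ K")
    case True then show ?thesis unfolding K_def[symmetric] by simp
  next
    case False
    define t where "t = tau p \<Phi> m"
    have tn: "t \<ge> n"
    proof (rule ccontr)
      assume "\<not> n \<le> t"
      then have "t \<le> n - 1" by simp
      then have "\<Phi> t \<le> \<Phi> (n - 1)" using sm by (simp add: strict_mono_less_eq)
      then have "p ^ (1 + \<Phi> t) \<le> p ^ K" unfolding K_def using p0 by (intro power_increasing) auto
      moreover have "m < p ^ (1 + \<Phi> t)" using tau_lt[OF p2 sm] t_def by simp
      ultimately show False using False by simp
    qed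
    then have t0: "t > 0" using n0 by simp
    define K' where "K' = 1 + \<Phi> (t - 1)"
    define m' where "m' = m mod p ^ K'"
    have "p ^ K' \<le> m" using tau_ge[of "t - 1" p \<Phi> m] t0 unfolding K'_def t_def by simp
    then have mm: "m' < m" unfolding m'_def using p0
      by (meson order_less_le_trans mod_less_divisor zero_less_power)
    have aZ: "zp_of_nat p m \<in> Zp p" and bZ: "zp_of_nat p m' \<in> Zp p" using zp_of_nat_Zp[OF p0] by auto
    have B: "Bcoef p \<Phi> f m = zp_diff p (f (zp_of_nat p m)) (f (zp_of_nat p m'))"
      using Bcoef_big[OF p2 sm, of m f] t0 unfolding m'_def K'_def t_def by simp
    have "enat n \<le> zp_val p (Bcoef p \<Phi> f m)" using H tn t_def
      by (meson enat_ord_simps(1) order_trans)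
    then have "f (zp_of_nat p m) n = f (zp_of_nat p m') n"
      unfolding B using val_ge[OF zp_diff_Zp[OF p0 fZp[OF fc aZ] fZp[OF fc bZ]]]
        diff_zero[OF fZp[OF fc aZ] fZp[OF fc bZ]] by simp
    also have "\<dots> = f (zp_of_nat p (m' mod p ^ K)) n" using less mm unfolding K_def by simp
    also have "m' mod p ^ K = m mod p ^ K"
    proof -
      have "\<Phi> (n - 1) \<le> \<Phi> (t - 1)" using tn sm by (simp add: strict_mono_less_eq)
      then have "p ^ K dvd p ^ K'" unfolding K_def K'_def by (intro le_imp_power_dvd) simp
      then show ?thesis unfolding m'_def by (simp add: mod_mod_cancel)
    qed
    finally show ?thesis unfolding K_def .
  qed
qed


lemma bwd:
  assumes pr: "prime p" and sm: "strict_mono \<Phi>" and fc: "zp_continuous p f"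
    and H: "\<forall>m. enat (tau p \<Phi> m) \<le> zp_val p (Bcoef p \<Phi> f m)"
  shows "f \<in> FF p \<Phi>"
proof -
  have p2: "p \<ge> 2" using prime_ge_2_nat[OF pr] .
  have p0: "p > 0" using p2 by simp
  have q: "0 < 1 / real p" "1 / real p < 1" using p2 by auto
  have approx: "\<exists>c. f x n = f (zp_of_nat p c) n \<and> c mod p ^ K = nat (x K)"
    if xZ: "x \<in> Zp p" for x n K
  proof -
    obtain d where d: "d > 0" and hd: "\<And>y. y \<in> Zp p \<Longrightarrow> zp_abs p (zp_diff p x y) < d \<Longrightarrow>
        zp_abs p (zp_diff p (f x) (f y)) < (1 / real p) ^ n"
    proof -
      have "\<forall>e>0. \<exists>d>0. \<forall>y\<in>Zp p. zp_abs p (zp_diff p x y) < d \<longrightarrow> zp_abs p (zp_diff p (f x) (f y)) < e"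
        using fc xZ unfolding zp_continuous_def by blast
      moreover have "(1 / real p) ^ n > 0" using q by simp
      ultimately obtain d where "d > 0" "\<forall>y\<in>Zp p. zp_abs p (zp_diff p x y) < d \<longrightarrow> zp_abs p (zp_diff p (f x) (f y)) < (1 / real p) ^ n"
        by blast
      then show ?thesis using that by blast
    qed
    obtain j0 where j0: "(1 / real p) ^ j0 < d" using real_arch_pow_inv[OF d q(2)] by blast
    define j where "j = j0 + K"
    define c where "c = nat (x j)"
    have cZ: "zp_of_nat p c \<in> Zp p" using zp_of_nat_Zp[OF p0] .
    have xj: "0 \<le> x j" "x j < int p ^ j" using Zp_D(1,2)[OF xZ] by auto
    have cj: "zp_of_nat p c j = x j" unfolding zp_of_nat_def c_def using xj by simp
    have "zp_abs p (zp_diff p x (zp_of_nat p c)) \<le> (1 / real p) ^ j"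
      using close_iff[OF pr xZ cZ, of j] cj by simp
    also have "\<dots> \<le> (1 / real p) ^ j0" unfolding j_def using q by simp
    finally have "zp_abs p (zp_diff p (f x) (f (zp_of_nat p c))) < (1 / real p) ^ n"
      using hd[OF cZ] j0 by simp
    then have "f x n = f (zp_of_nat p c) n"
      using close_iff[OF pr fZp[OF fc xZ] fZp[OF fc cZ], of n] by simp
    moreover have "c mod p ^ K = nat (x K)"
    proof -
      have "x K = x j mod int p ^ K" using Zp_coh[OF xZ, of K j] unfolding j_def by simp
      also have "\<dots> = int c mod int p ^ K" unfolding c_def using xj by simp
      also have "\<dots> = int (c mod p ^ K)" by (simp add: of_nat_mod)
      finally show ?thesis by simp
    qed
    ultimately show ?thesis by blast
  qed
  have main: "f x n = f y n" if xZ: "x \<in> Zp p" and yZ: "y \<in> Zp p" and n0: "n > 0"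
    and xy: "x (1 + \<Phi> (n - 1)) = y (1 + \<Phi> (n - 1))" for x y n
  proof -
    define K where "K = 1 + \<Phi> (n - 1)"
    obtain a where a: "f x n = f (zp_of_nat p a) n" "a mod p ^ K = nat (x K)"
      using approx[OF xZ] by blast
    obtain b where b: "f y n = f (zp_of_nat p b) n" "b mod p ^ K = nat (y K)"
      using approx[OF yZ] by blast
    have "a mod p ^ K = b mod p ^ K" using a(2) b(2) xy unfolding K_def by simp
    then show ?thesis using a(1) b(1) nat_step[OF pr sm fc H n0, of a] nat_step[OF pr sm fc H n0, of b]
      unfolding K_def by simp
  qed
  show ?thesis unfolding FF_def
  proof (intro CollectI conjI fc allI impI ballI)
    fix n x y assume n0: "0 < n" and xZ: "x \<in> Zp p" and yZ: "y \<in> Zp p"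
      and le: "zp_abs p (zp_diff p x y) \<le> (1 / real p) ^ (1 + \<Phi> (n - 1))"
    have "x (1 + \<Phi> (n - 1)) = y (1 + \<Phi> (n - 1))" using close_iff[OF pr xZ yZ] le by blast
    then have "f x n = f y n" using main xZ yZ n0 by blast
    then show "zp_abs p (zp_diff p (f x) (f y)) \<le> (1 / real p) ^ n"
      using close_iff[OF pr fZp[OF fc xZ] fZp[OF fc yZ]] by blast
  qed
qed

theorem proposition2:
  fixes p :: nat and \<Phi> :: "nat \<Rightarrow> nat" and f :: "zp \<Rightarrow> zp"
  assumes "prime p" and "strict_mono \<Phi>" and "zp_continuous p f"
  shows "f \<in> FF p \<Phi> \<longleftrightarrow> (\<forall>m. zp_val p (Bcoef p \<Phi> f m) \<ge> enat (tau p \<Phi> m))"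
  using fwd[OF assms] bwd[OF assms] by blast

end
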